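(* Let $\gamma$ be a quasiorder on a set $A$ and let $\alpha$ be a half-space on $A$ with $\gamma\subseteq\alpha$. Then there exists a half-space $\tau$ on $A$ such that $\gamma\subseteq\tau\subseteq\alpha$ and $\tau\cap\tau^{-1}=\gamma\cap\gamma^{-1}$.
   Context: A quasiorder on $A$ is a reflexive and transitive relation; $\Delta_A=\{(a,a)\mid a\in A\}$. A quasiorder $\alpha$ on $A$ is a half-space if there is a quasiorder $\beta$ on $A$ with $\alpha\cup\beta=A\times A$ and $\alpha\cap\beta=\Delta_A$. *)

theory Defs
  imports Main
begin

definition half_space :: "'a set \<Rightarrow> 'a rel \<Rightarrow> bool" where
  "half_space A \<alpha> \<longleftrightarrow> preorder_on A \<alpha> \<and>
     (\<exists>\<beta>. preorder_on A \<beta> \<and> \<alpha> \<union> \<beta> = A \<times> A \<and> \<alpha> \<inter> \<beta> = Id_on A)"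

end

theory Submission
  imports Defs
begin

lemma extend_step:
  assumes p: "preorder_on A t" and ab: "(a,b) \<notin> t" "(b,a) \<notin> t"
    and aA: "a \<in> A" "b \<in> A"
  defines "t' \<equiv> t \<union> {(x,y). (x,a) \<in> t \<and> (b,y) \<in> t}"
  shows "preorder_on A t'" "t' \<inter> t'\<inverse> = t \<inter> t\<inverse>" "(a,b) \<in> t'"
proof -
  have tr: "trans t" and sub: "t \<subseteq> A \<times> A" and rf: "refl_on A t"
    using p by (auto simp: preorder_on_def)
  have ba: "\<And>y. (b,y) \<in> t \<Longrightarrow> (y,a) \<in> t \<Longrightarrow> False"
    using tr ab by (meson transD)
  show "preorder_on A t'"
    unfolding preorder_on_def
  proof (intro conjI)
    show "t' \<subseteq> A \<times> A" using sub unfolding t'_def by auto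
    show "refl_on A t'" using rf unfolding t'_def refl_on_def by auto
    show "trans t'"
    proof (rule transI)
      fix x y z assume xy: "(x,y) \<in> t'" and yz: "(y,z) \<in> t'"
      show "(x,z) \<in> t'"
      proof (cases "(x,y) \<in> t")
        case T1: True
        show ?thesis
        proof (cases "(y,z) \<in> t")
          case True then show ?thesis using T1 tr unfolding t'_def by (meson UnI1 transD)
        next
          case False
          then have "(y,a) \<in> t" "(b,z) \<in> t" using yz unfolding t'_def by auto
          then have "(x,a) \<in> t" using T1 tr by (meson transD)
          then show ?thesis using \<open>(b,z) \<in> t\<close> unfolding t'_def by auto
        qed
      next
        case F1: False
        then have xa: "(x,a) \<in> t" and by_: "(b,y) \<in> t" using xy unfolding t'_def by auto
        show ?thesis
        proof (cases "(y,z) \<in> t")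
          case True then have "(b,z) \<in> t" using by_ tr by (meson transD)
          then show ?thesis using xa unfolding t'_def by auto
        next
          case False
          then have "(y,a) \<in> t" using yz unfolding t'_def by auto
          then show ?thesis using ba by_ by blast
        qed
      qed
    qed
  qed
  show "t' \<inter> t'\<inverse> = t \<inter> t\<inverse>"
  proof
    show "t \<inter> t\<inverse> \<subseteq> t' \<inter> t'\<inverse>" unfolding t'_def by auto
    show "t' \<inter> t'\<inverse> \<subseteq> t \<inter> t\<inverse>"
    proof
      fix p assume "p \<in> t' \<inter> t'\<inverse>"
      then obtain x y where pxy: "p = (x,y)" and xy: "(x,y) \<in> t'" and yx: "(y,x) \<in> t'" by auto
      have "(x,y) \<in> t"
      proof (rule ccontr)
        assume "(x,y) \<notin> t"
        then have xa: "(x,a) \<in> t" and by_: "(b,y) \<in> t" using xy unfolding t'_def by auto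
        show False
        proof (cases "(y,x) \<in> t")
          case True then show False using xa by_ ba tr by (meson transD)
        next
          case False then have "(y,a) \<in> t" using yx unfolding t'_def by auto
          then show False using by_ ba by blast
        qed
      qed
      moreover have "(y,x) \<in> t"
      proof (rule ccontr)
        assume "(y,x) \<notin> t"
        then have ya: "(y,a) \<in> t" and bx: "(b,x) \<in> t" using yx unfolding t'_def by auto
        show False
        proof (cases "(x,y) \<in> t")
          case True then show False using ya bx ba tr by (meson transD)
        next
          case False then have "(x,a) \<in> t" using xy unfolding t'_def by auto
          then show False using bx ba by blast
        qed
      qed
      ultimately show "p \<in> t \<inter> t\<inverse>" using pxy by auto
    qed
  qed
  show "(a,b) \<in> t'" using rf aA unfolding t'_def refl_on_def by auto
qed

theorem proposition2p4:
  assumes "preorder_on A \<gamma>" and "half_space A \<alpha>" and "\<gamma> \<subseteq> \<alpha>"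
  shows "\<exists>\<tau>. half_space A \<tau> \<and> \<gamma> \<subseteq> \<tau> \<and> \<tau> \<subseteq> \<alpha> \<and> \<tau> \<inter> \<tau>\<inverse> = \<gamma> \<inter> \<gamma>\<inverse>"
proof -
  obtain \<beta> where pa: "preorder_on A \<alpha>" and pb: "preorder_on A \<beta>"
    and un: "\<alpha> \<union> \<beta> = A \<times> A" and it: "\<alpha> \<inter> \<beta> = Id_on A"
    using assms(2) unfolding half_space_def by blast
  define S where "S = {t. preorder_on A t \<and> \<gamma> \<subseteq> t \<and> t \<subseteq> \<alpha> \<and> t \<inter> t\<inverse> = \<gamma> \<inter> \<gamma>\<inverse>}"
  have SD: "\<And>X. X \<in> S \<longleftrightarrow> (preorder_on A X \<and> \<gamma> \<subseteq> X \<and> X \<subseteq> \<alpha> \<and> X \<inter> X\<inverse> = \<gamma> \<inter> \<gamma>\<inverse>)" unfolding S_def by simp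
  have "\<exists>M\<in>S. \<forall>X\<in>S. M \<subseteq> X \<longrightarrow> X = M"
  proof (rule Zorn_Lemma2, intro ballI)
    fix C assume C: "C \<in> chains S"
    have CS: "C \<subseteq> S" and ch: "\<And>X Y. X \<in> C \<Longrightarrow> Y \<in> C \<Longrightarrow> X \<subseteq> Y \<or> Y \<subseteq> X"
      using C unfolding chains_def chain_subset_def by auto
    have XC: "\<And>X. X \<in> C \<Longrightarrow> preorder_on A X \<and> \<gamma> \<subseteq> X \<and> X \<subseteq> \<alpha> \<and> X \<inter> X\<inverse> = \<gamma> \<inter> \<gamma>\<inverse>" using CS SD by blast
    have XA: "\<And>X. X \<in> C \<Longrightarrow> X \<subseteq> A \<times> A" using XC unfolding preorder_on_def by simp
    have Xtr: "\<And>X. X \<in> C \<Longrightarrow> trans X" using XC unfolding preorder_on_def by simp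
    have Xa: "\<And>X. X \<in> C \<Longrightarrow> X \<subseteq> \<alpha>" using XC by simp
    have Xs: "\<And>X. X \<in> C \<Longrightarrow> X \<inter> X\<inverse> = \<gamma> \<inter> \<gamma>\<inverse>" using XC by simp
    have gX: "\<And>X. X \<in> C \<Longrightarrow> \<gamma> \<subseteq> X" using XC by simp
    have gA: "\<gamma> \<subseteq> A \<times> A" and gtr: "trans \<gamma>" and grf: "refl_on A \<gamma>" using assms(1) unfolding preorder_on_def by simp_all
    define U where "U = \<gamma> \<union> \<Union>C"
    have mem: "\<And>p. p \<in> U \<Longrightarrow> p \<in> \<gamma> \<or> (\<exists>X\<in>C. p \<in> X)" unfolding U_def by auto
    have two: "\<And>p q. p \<in> U \<Longrightarrow> q \<in> U \<Longrightarrow> (p \<in> \<gamma> \<and> q \<in> \<gamma>) \<or> (\<exists>X\<in>C. p \<in> X \<and> q \<in> X)"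
    proof -
      fix p q assume "p \<in> U" "q \<in> U"
      from mem[OF \<open>p \<in> U\<close>] mem[OF \<open>q \<in> U\<close>]
      show "(p \<in> \<gamma> \<and> q \<in> \<gamma>) \<or> (\<exists>X\<in>C. p \<in> X \<and> q \<in> X)"
      proof (elim disjE bexE)
        fix X Y assume "X \<in> C" "p \<in> X" "Y \<in> C" "q \<in> Y"
        then show ?thesis using ch[of X Y] by blast
      next
        fix X assume "X \<in> C" "p \<in> X" "q \<in> \<gamma>"
        then show ?thesis using gX by blast
      next
        fix X assume "X \<in> C" "q \<in> X" "p \<in> \<gamma>"
        then show ?thesis using gX by blast
      qed simp
    qed
    have "U \<in> S"
      unfolding SD
    proof (intro CollectI conjI)
      show "preorder_on A U" unfolding preorder_on_def
      proof (intro conjI)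
        show "U \<subseteq> A \<times> A" unfolding U_def using gA XA by blast
        show "refl_on A U" using grf unfolding U_def refl_on_def by blast
        show "trans U"
        proof (rule transI)
          fix x y z assume xy: "(x,y) \<in> U" and yz: "(y,z) \<in> U"
          from two[OF xy yz] show "(x,z) \<in> U"
          proof
            assume "(x,y) \<in> \<gamma> \<and> (y,z) \<in> \<gamma>"
            then show ?thesis using gtr unfolding U_def by (meson UnI1 transD)
          next
            assume "\<exists>X\<in>C. (x,y) \<in> X \<and> (y,z) \<in> X"
            then obtain X where "X \<in> C" "(x,y) \<in> X" "(y,z) \<in> X" by blast
            moreover then have "trans X" using Xtr by blast
            ultimately show ?thesis unfolding U_def by (meson UnI2 UnionI transD)
          qed
        qed
      qed
      show "\<gamma> \<subseteq> U" unfolding U_def by auto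
      show "U \<subseteq> \<alpha>" using assms(3) Xa unfolding U_def by blast
      show "U \<inter> U\<inverse> = \<gamma> \<inter> \<gamma>\<inverse>"
      proof
        show "U \<inter> U\<inverse> \<subseteq> \<gamma> \<inter> \<gamma>\<inverse>"
        proof
          fix p assume "p \<in> U \<inter> U\<inverse>"
          then obtain x y where p: "p = (x,y)" "(x,y) \<in> U" "(y,x) \<in> U" by auto
          from two[OF p(2) p(3)] show "p \<in> \<gamma> \<inter> \<gamma>\<inverse>"
          proof
            assume "\<exists>X\<in>C. (x,y) \<in> X \<and> (y,x) \<in> X"
            then obtain X where "X \<in> C" "(x,y) \<in> X" "(y,x) \<in> X" by blast
            moreover then have "X \<inter> X\<inverse> = \<gamma> \<inter> \<gamma>\<inverse>" using Xs by blast
            ultimately show ?thesis using p by blast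
          qed (use p in auto)
        qed
        show "\<gamma> \<inter> \<gamma>\<inverse> \<subseteq> U \<inter> U\<inverse>" unfolding U_def by auto
      qed
    qed
    moreover have "\<forall>X\<in>C. X \<subseteq> U" unfolding U_def by blast
    ultimately show "\<exists>U\<in>S. \<forall>X\<in>C. X \<subseteq> U" by blast
  qed
  then obtain t where tS: "t \<in> S" and mx: "\<And>X. X \<in> S \<Longrightarrow> t \<subseteq> X \<Longrightarrow> X = t" by blast
  have pt: "preorder_on A t" and gt: "\<gamma> \<subseteq> t" and ta: "t \<subseteq> \<alpha>" and st: "t \<inter> t\<inverse> = \<gamma> \<inter> \<gamma>\<inverse>"
    using tS unfolding SD by simp_all
  have trt: "trans t" and rft: "refl_on A t" using pt unfolding preorder_on_def by auto
  have trb: "trans \<beta>" using pb unfolding preorder_on_def by auto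
  have maxl: "(a,b) \<in> t \<or> (b,a) \<in> t" if "(a,b) \<in> \<alpha>" for a b
  proof (rule ccontr)
    assume n: "\<not> ((a,b) \<in> t \<or> (b,a) \<in> t)"
    have aA: "a \<in> A" "b \<in> A" using that un by auto
    define t' where "t' = t \<union> {(x,y). (x,a) \<in> t \<and> (b,y) \<in> t}"
    have na: "(a,b) \<notin> t" and nb: "(b,a) \<notin> t" using n by auto
    note e = extend_step[OF pt na nb aA, folded t'_def]
    have "t' \<subseteq> \<alpha>"
    proof
      fix p assume "p \<in> t'"
      then consider "p \<in> t" | x y where "p = (x,y)" "(x,a) \<in> t" "(b,y) \<in> t"
        unfolding t'_def by auto
      then show "p \<in> \<alpha>"
      proof cases
        case 1 then show ?thesis using ta by auto
      next
        case 2
        have "trans \<alpha>" using pa unfolding preorder_on_def by auto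
        then show ?thesis using 2 ta that by (meson subsetD transD)
      qed
    qed
    moreover have tt: "t \<subseteq> t'" unfolding t'_def by auto
    moreover have "\<gamma> \<subseteq> t'" using gt tt by (rule order_trans)
    ultimately have "t' \<in> S" unfolding SD using e(1,2) st by simp
    then have "t' = t" using mx \<open>t \<subseteq> t'\<close> by blast
    then show False using e(3) n by auto
  qed
  define s where "s = Id_on A \<union> (A \<times> A - t)"
  have "preorder_on A s" unfolding preorder_on_def
  proof (intro conjI)
    show "s \<subseteq> A \<times> A" unfolding s_def by auto
    show "refl_on A s" unfolding s_def refl_on_def by auto
    show "trans s"
    proof (rule transI)
      fix x y z assume xy: "(x,y) \<in> s" and yz: "(y,z) \<in> s"
      show "(x,z) \<in> s"
      proof (cases "x = y \<or> y = z \<or> x = z")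
        case True then show ?thesis using xy yz unfolding s_def by auto
      next
        case False
        then have A: "x \<in> A" "y \<in> A" "z \<in> A" and nxy: "(x,y) \<notin> t" and nyz: "(y,z) \<notin> t"
          using xy yz unfolding s_def by auto
        show ?thesis
        proof (rule ccontr)
          assume "(x,z) \<notin> s"
          then have xz: "(x,z) \<in> t" using A unfolding s_def by auto
          show False
          proof (cases "(x,y) \<in> \<alpha>")
            case True
            then have "(y,x) \<in> t" using maxl nxy by blast
            then show False using xz nyz trt by (meson transD)
          next
            case False
            then have "(x,y) \<in> \<beta>" using un A by auto
            show False
            proof (cases "(y,z) \<in> \<alpha>")
              case True
              then have "(z,y) \<in> t" using maxl nyz by blast
              then show False using xz nxy trt by (meson transD)
            next
              case False
              then have "(y,z) \<in> \<beta>" using un A by auto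
              then have "(x,z) \<in> \<beta>" using \<open>(x,y) \<in> \<beta>\<close> trb by (meson transD)
              then have "(x,z) \<in> Id_on A" using xz ta it by auto
              then show False using \<open>\<not> (x = y \<or> y = z \<or> x = z)\<close> by auto
            qed
          qed
        qed
      qed
    qed
  qed
  moreover have "t \<union> s = A \<times> A" using ta un unfolding s_def by auto
  moreover have "t \<inter> s = Id_on A" using rft pt unfolding s_def refl_on_def preorder_on_def by auto
  ultimately have "half_space A t" using pt unfolding half_space_def by blast
  then show ?thesis using gt ta st by blast
qed

end
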